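(* Let $q$ be a prime power and $\mathbb F_q$ the field with $q$ elements. For $z\in\mathbb F_q$ let $v_z=(1,z,z^2,z^3)\in\mathbb F_q^4$, and let $\mathcal L_z=\{\{x+yv_z: y\in\mathbb F_q\}: x\in\mathbb F_q^4\}$ be the set of lines in direction $v_z$. Let $G=G(q)$ be the bipartite graph with parts $P=\mathbb F_q^4$ and $L=\bigcup_{z\in\mathbb F_q}\mathcal L_z$, where a point $p\in P$ is adjacent to a line $\ell\in L$ if and only if $p\in\ell$. Suppose $p_1\ell_1p_2\ell_2p_3\ell_3p_4\ell_4p_1$ is a cycle of length $8$ in $G$ (so $p_1,\dots,p_4\in P$ and $\ell_1,\dots,\ell_4\in L$ are eight distinct vertices, with $p_1,p_2\in\ell_1$, $p_2,p_3\in\ell_2$, $p_3,p_4\in\ell_3$, $p_4,p_1\in\ell_4$), and let $v_1,v_2,v_3,v_4$ be the directions of $\ell_1,\ell_2,\ell_3,\ell_4$ respectively (i.e. $v_i=v_{z}$ where $\ell_i\in\mathcal L_{z}$). Then $v_1=v_3$, $v_2=v_4$, and $v_1\neq v_2$. *)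

theory Defs
  imports "HOL-Analysis.Analysis"
begin

text \<open>Points of F_q^4 are modelled as vectors of type 'a ^ 4, where 'a is a
finite field (every finite field has prime-power order, and every F_q arises).\<close>

definition moment_dir :: "'a::field \<Rightarrow> 'a ^ 4" where
  "moment_dir z = vector [1, z, z ^ 2, z ^ 3]"

definition line_through :: "'a::field ^ 4 \<Rightarrow> 'a \<Rightarrow> ('a ^ 4) set" where
  "line_through x z = {x + y *s moment_dir z | y. True}"

definition lines_dir :: "'a::field \<Rightarrow> ('a ^ 4) set set" where
  "lines_dir z = {line_through x z | x. True}"

definition graph_lines :: "('a::field ^ 4) set set" where
  "graph_lines = (\<Union>z. lines_dir z)"

end

theory Submission
  imports Defs
begin
lemma md: "moment_dir z $ 1 = 1" "moment_dir z $ 2 = z" "moment_dir z $ 3 = z^2" "moment_dir z $ 4 = (z::'a::field)^3"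
  unfolding moment_dir_def vector_def by simp_all

lemma md_inj: "moment_dir z = moment_dir w \<longleftrightarrow> z = w"
  by (metis md(2))

lemma key:
  fixes z1 z2 z3 z4 a1 a2 a3 a4 :: "'a::field"
  assumes "a1 *s moment_dir z1 + a2 *s moment_dir z2 + a3 *s moment_dir z3 + a4 *s moment_dir z4 = 0"
    and "z1 \<noteq> z2" "z1 \<noteq> z3" "z1 \<noteq> z4"
  shows "a1 = 0"
proof -
  let ?w = "a1 *s moment_dir z1 + a2 *s moment_dir z2 + a3 *s moment_dir z3 + a4 *s moment_dir z4"
  define f where "f x = (x - z2) * (x - z3) * (x - z4)" for x
  have "?w $ 4 - (z2+z3+z4) * ?w $ 3 + (z2*z3+z2*z4+z3*z4) * ?w $ 2 - z2*z3*z4 * ?w $ 1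
     = a1 * f z1 + a2 * f z2 + a3 * f z3 + a4 * f z4"
    by (simp add: md f_def algebra_simps power2_eq_square power3_eq_cube)
  also have "\<dots> = a1 * f z1" by (simp add: f_def)
  finally have "a1 * f z1 = 0" using assms(1) by simp
  moreover have "f z1 \<noteq> 0" using assms(2-4) by (simp add: f_def)
  ultimately show ?thesis by simp
qed

lemma on_line: "l \<in> lines_dir z \<Longrightarrow> p \<in> l \<Longrightarrow> q \<in> l \<Longrightarrow> \<exists>a. q - p = a *s moment_dir z"
  unfolding lines_dir_def line_through_def
  apply clarify
  apply (rule_tac x="ya - y" in exI)
  by (simp add: algebra_simps)

lemma line_shift:
  assumes "p = x + y *s moment_dir z"
  shows "line_through x z = line_through p z"
proof (rule set_eqI)
  fix q
  show "q \<in> line_through x z \<longleftrightarrow> q \<in> line_through p z"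
  proof
    assume "q \<in> line_through x z"
    then obtain t where "q = x + t *s moment_dir z" unfolding line_through_def by blast
    then have "q = p + (t - y) *s moment_dir z" using assms by (simp add: algebra_simps)
    then show "q \<in> line_through p z" unfolding line_through_def by blast
  next
    assume "q \<in> line_through p z"
    then obtain t where "q = p + t *s moment_dir z" unfolding line_through_def by blast
    then have "q = x + (t + y) *s moment_dir z" using assms by (simp add: algebra_simps)
    then show "q \<in> line_through x z" unfolding line_through_def by blast
  qed
qed

lemma same_line:
  assumes "l \<in> lines_dir z" "m \<in> lines_dir z" "p \<in> l" "p \<in> m"
  shows "l = m"
proof -
  obtain x where x: "l = line_through x z" using assms(1) unfolding lines_dir_def by blast
  obtain x' where x': "m = line_through x' z" using assms(2) unfolding lines_dir_def by blast
  obtain y where "p = x + y *s moment_dir z" using assms(3) x unfolding line_through_def by blast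
  then have "l = line_through p z" using x line_shift by blast
  moreover obtain y' where "p = x' + y' *s moment_dir z" using assms(4) x' unfolding line_through_def by blast
  then have "m = line_through p z" using x' line_shift by blast
  ultimately show ?thesis by simp
qed

theorem lemma4p2:
  fixes p1 p2 p3 p4 :: "'a::{finite,field} ^ 4"
    and l1 l2 l3 l4 :: "('a ^ 4) set"
    and z1 z2 z3 z4 :: 'a
  assumes "l1 \<in> graph_lines" "l2 \<in> graph_lines" "l3 \<in> graph_lines" "l4 \<in> graph_lines"
    and "distinct [p1, p2, p3, p4]" "distinct [l1, l2, l3, l4]"
    and "p1 \<in> l1" "p2 \<in> l1" "p2 \<in> l2" "p3 \<in> l2"
        "p3 \<in> l3" "p4 \<in> l3" "p4 \<in> l4" "p1 \<in> l4"
    and "l1 \<in> lines_dir z1" "l2 \<in> lines_dir z2" "l3 \<in> lines_dir z3" "l4 \<in> lines_dir z4"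
  shows "moment_dir z1 = moment_dir z3 \<and> moment_dir z2 = moment_dir z4
         \<and> moment_dir z1 \<noteq> moment_dir z2"
proof -
  have d12: "z1 \<noteq> z2" using same_line[of l1 z1 l2 p2] assms(6,8,9,15,16) by auto
  have d23: "z2 \<noteq> z3" using same_line[of l2 z2 l3 p3] assms(6,10,11,16,17) by auto
  have d34: "z3 \<noteq> z4" using same_line[of l3 z3 l4 p4] assms(6,12,13,17,18) by auto
  have d41: "z4 \<noteq> z1" using same_line[of l4 z4 l1 p1] assms(6,14,7,18,15) by auto
  obtain a1 where a1: "p2 - p1 = a1 *s moment_dir z1" using on_line assms(7-18) by metis
  obtain a2 where a2: "p3 - p2 = a2 *s moment_dir z2" using on_line assms(7-18) by metis
  obtain a3 where a3: "p4 - p3 = a3 *s moment_dir z3" using on_line assms(7-18) by metis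
  obtain a4 where a4: "p1 - p4 = a4 *s moment_dir z4" using on_line assms(7-18) by metis
  have n1: "a1 \<noteq> 0" using a1 assms(5) by auto
  have n2: "a2 \<noteq> 0" using a2 assms(5) by auto
  have sum: "a1 *s moment_dir z1 + a2 *s moment_dir z2 + a3 *s moment_dir z3 + a4 *s moment_dir z4 = 0"
    unfolding a1[symmetric] a2[symmetric] a3[symmetric] a4[symmetric] by simp
  have "z1 = z3"
  proof (rule ccontr)
    assume "z1 \<noteq> z3" then have "a1 = 0" using key[OF sum] d12 d41 by metis
    with n1 show False by simp
  qed
  moreover have "z2 = z4"
  proof (rule ccontr)
    assume "z2 \<noteq> z4"
    have "a2 *s moment_dir z2 + a3 *s moment_dir z3 + a4 *s moment_dir z4 + a1 *s moment_dir z1 = 0"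
      using sum by (simp add: algebra_simps)
    then have "a2 = 0" using key d12 d23 \<open>z2 \<noteq> z4\<close> by metis
    with n2 show False by simp
  qed
  ultimately show ?thesis using d12 md_inj by metis
qed
end
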